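(* Let $H:\mathbb{R}_+\to[0,1]$ be a measurable function with $\|H\|_1:=\int_0^\infty H(x)\,dx<\infty$ and $\|H\|_2^2:=\int_0^\infty H(x)^2\,dx<\|H\|_1$. Fix $\tau>0$ and $\alpha>0$. For positive integers $L$ set $R_L=\ln(\tau L)/(2\|H\|_1)$. Let $\mathcal{P}_L$ be a Poisson point process of unit intensity on the torus $[0,L]$ (with $0$ and $L$ identified), with circular distance $\rho^L(x,y)=\min\{|x-y|,L-|x-y|\}$, and let $\tilde h^L(x,y)=H(\rho^L(x,y)/R_L)\mathbb{1}\{\rho^L(x,y)\le R_L^{1+1/\alpha}\}$. Let $\mathcal{G}_{\tilde h^L}(\mathcal{P}_L)$ be the random graph on vertex set $\mathcal{P}_L$ in which, conditionally on $\mathcal{P}_L$, each pair of distinct nodes $x,y$ is joined by an edge with probability $\tilde h^L(x,y)$, independently over pairs. For $m\in\mathbb{N}$, divide the torus into segments $A_i=[(i-1)/m,i/m)$, $i\in\Gamma=\{1,\dots,mL\}$, with centres $x_i$, and let $I_i$ be the indicator that $A_i$ contains exactly one node of $\mathcal{P}_L$ and that node is isolated in $\mathcal{G}_{\tilde h^L}(\mathcal{P}_L)$. Let $B_i=\{j\in\Gamma:\rho^L(x_i,x_j)\le 3R_L^{1+1/\alpha}\}$, $p_{ij}=\mathbb{E}[I_iI_j]$, and $b_2=\sum_{i\in\Gamma}\sum_{j\in B_i\setminus\{i\}}p_{ij}$ (which depends on $m$ and $L$). Then $b_2$ tends to zero as $m\to\infty$ followed by $L\to\infty$, i.e. $\lim_{L\to\infty}\limsup_{m\to\infty}b_2=0$.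 *)

theory Defs
  imports "HOL-Probability.Probability"
begin

definition rhoL :: "real \<Rightarrow> real \<Rightarrow> real \<Rightarrow> real" where
  "rhoL L x y = min \<bar>x - y\<bar> (L - \<bar>x - y\<bar>)"

definition norm1 :: "(real \<Rightarrow> real) \<Rightarrow> real" where
  "norm1 H = (LBINT x:{0..}. H x)"

definition norm2sq :: "(real \<Rightarrow> real) \<Rightarrow> real" where
  "norm2sq H = (LBINT x:{0..}. (H x)\<^sup>2)"

definition RL :: "(real \<Rightarrow> real) \<Rightarrow> real \<Rightarrow> nat \<Rightarrow> real" where
  "RL H \<tau> L = ln (\<tau> * real L) / (2 * norm1 H)"

definition htilde :: "(real \<Rightarrow> real) \<Rightarrow> real \<Rightarrow> real \<Rightarrow> nat \<Rightarrow> real \<Rightarrow> real \<Rightarrow> real" where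
  "htilde H \<tau> \<alpha> L x y =
     (if rhoL (real L) x y \<le> RL H \<tau> L powr (1 + 1 / \<alpha>)
      then H (rhoL (real L) x y / RL H \<tau> L) else 0)"

definition pairs :: "nat \<Rightarrow> (nat \<times> nat) set" where
  "pairs n = {(a, b). a < b \<and> b < n}"

definition edge_pmf ::
  "(real \<Rightarrow> real) \<Rightarrow> real \<Rightarrow> real \<Rightarrow> nat \<Rightarrow> nat \<Rightarrow> (nat \<Rightarrow> real) \<Rightarrow> (nat \<times> nat \<Rightarrow> bool) pmf" where
  "edge_pmf H \<tau> \<alpha> L n x =
     Pi_pmf (pairs n) False (\<lambda>(a, b). bernoulli_pmf (htilde H \<tau> \<alpha> L (x a) (x b)))"

definition adj :: "(nat \<times> nat \<Rightarrow> bool) \<Rightarrow> nat \<Rightarrow> nat \<Rightarrow> bool" where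
  "adj e k l = (if k < l then e (k, l) else e (l, k))"

definition seg :: "nat \<Rightarrow> nat \<Rightarrow> real set" where
  "seg m i = {(real i - 1) / real m ..< real i / real m}"

definition centre :: "nat \<Rightarrow> nat \<Rightarrow> real" where
  "centre m i = (real i - 1 / 2) / real m"

definition good :: "nat \<Rightarrow> nat \<Rightarrow> (nat \<Rightarrow> real) \<Rightarrow> (nat \<times> nat \<Rightarrow> bool) \<Rightarrow> nat \<Rightarrow> bool" where
  "good m n x e i =
     (\<exists>k<n. {l. l < n \<and> x l \<in> seg m i} = {k} \<and> (\<forall>l<n. l \<noteq> k \<longrightarrow> \<not> adj e k l))"

text \<open>The Poisson process of unit intensity on [0,L) is realised as
  N ~ Poisson(L) followed by N i.i.d. uniform points on [0,L); conditionally on the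
  points, edges are independent. The expectation is the corresponding mixture.\<close>
definition pij :: "(real \<Rightarrow> real) \<Rightarrow> real \<Rightarrow> real \<Rightarrow> nat \<Rightarrow> nat \<Rightarrow> nat \<Rightarrow> nat \<Rightarrow> real" where
  "pij H \<tau> \<alpha> m L i j =
     (\<Sum>n. pmf (poisson_pmf (real L)) n *
        (\<integral>x. measure_pmf.prob (edge_pmf H \<tau> \<alpha> L n x)
                 {e. good m n x e i \<and> good m n x e j}
           \<partial>(PiM {..<n} (\<lambda>_. uniform_measure lborel {0..<real L}))))"

definition Gamma :: "nat \<Rightarrow> nat \<Rightarrow> nat set" where
  "Gamma m L = {1 .. m * L}"

definition Bset :: "(real \<Rightarrow> real) \<Rightarrow> real \<Rightarrow> real \<Rightarrow> nat \<Rightarrow> nat \<Rightarrow> nat \<Rightarrow> nat set" where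
  "Bset H \<tau> \<alpha> m L i =
     {j \<in> Gamma m L. rhoL (real L) (centre m i) (centre m j) \<le> 3 * RL H \<tau> L powr (1 + 1 / \<alpha>)}"

definition b2 :: "(real \<Rightarrow> real) \<Rightarrow> real \<Rightarrow> real \<Rightarrow> nat \<Rightarrow> nat \<Rightarrow> real" where
  "b2 H \<tau> \<alpha> m L = (\<Sum>i\<in>Gamma m L. \<Sum>j\<in>Bset H \<tau> \<alpha> m L i - {i}. pij H \<tau> \<alpha> m L i j)"

end

theory Submission
  imports Defs "HOL-Real_Asymp.Real_Asymp"
begin

definition Hp :: "(real \<Rightarrow> real) \<Rightarrow> real \<Rightarrow> real" where
  "Hp H s = indicator {0..} s * H s"

definition hh :: "(real \<Rightarrow> real) \<Rightarrow> real \<Rightarrow> real \<Rightarrow> nat \<Rightarrow> real \<Rightarrow> real" where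
  "hh H \<tau> \<alpha> L r = (if r \<le> RL H \<tau> L powr (1 + 1 / \<alpha>) then Hp H (r / RL H \<tau> L) else 0)"

definition psi :: "(real \<Rightarrow> real) \<Rightarrow> real \<Rightarrow> real \<Rightarrow> nat \<Rightarrow> real \<Rightarrow> real \<Rightarrow> real \<Rightarrow> real" where
  "psi H \<tau> \<alpha> L a b z = (if z \<in> {0..<real L} then
      (1 - hh H \<tau> \<alpha> L (rhoL (real L) a z)) * (1 - hh H \<tau> \<alpha> L (rhoL (real L) b z)) else 1)"

lemma rhoL_sym: "rhoL L a b = rhoL L b a"
  unfolding rhoL_def by (simp add: abs_minus_commute)

lemma rhoL_nonneg: "a \<in> {0..<L} \<Longrightarrow> b \<in> {0..<L} \<Longrightarrow> rhoL L a b \<ge> 0"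
  unfolding rhoL_def by auto

lemma Hp_range: assumes "\<And>x. x \<ge> 0 \<Longrightarrow> 0 \<le> H x \<and> H x \<le> 1"
  shows "0 \<le> Hp H s" "Hp H s \<le> 1"
  using assms[of s] by (auto simp: Hp_def indicator_def)

lemma hh_range: assumes "\<And>x. x \<ge> 0 \<Longrightarrow> 0 \<le> H x \<and> H x \<le> 1"
  shows "0 \<le> hh H \<tau> \<alpha> L r" "hh H \<tau> \<alpha> L r \<le> 1"
  using Hp_range[OF assms] by (auto simp: hh_def)

lemma psi_range: assumes "\<And>x. x \<ge> 0 \<Longrightarrow> 0 \<le> H x \<and> H x \<le> 1"
  shows "0 \<le> psi H \<tau> \<alpha> L a b z" "psi H \<tau> \<alpha> L a b z \<le> 1"
  using hh_range[OF assms] unfolding psi_def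
  by (auto intro!: mult_nonneg_nonneg mult_le_one)

lemma htilde_eq: assumes "\<And>x. x \<ge> 0 \<Longrightarrow> 0 \<le> H x \<and> H x \<le> 1" "RL H \<tau> L > 0"
  "a \<in> {0..<real L}" "z \<in> {0..<real L}"
  shows "htilde H \<tau> \<alpha> L a z = hh H \<tau> \<alpha> L (rhoL (real L) a z)"
proof -
  have "rhoL (real L) a z \<ge> 0" using rhoL_nonneg assms(3,4) by blast
  then show ?thesis using assms(2) unfolding htilde_def hh_def Hp_def
    by (auto simp: indicator_def)
qed

lemma prob_bern_False: "0 \<le> p \<Longrightarrow> p \<le> 1 \<Longrightarrow> measure_pmf.prob (bernoulli_pmf p) {False} = 1 - p"
  by (simp add: measure_pmf_single)


lemma prob_good_bound:
  fixes H :: "real \<Rightarrow> real"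
  assumes range: "\<And>x. x \<ge> 0 \<Longrightarrow> 0 \<le> H x \<and> H x \<le> 1"
    and R: "RL H \<tau> L > 0"
    and Ai: "seg m i \<subseteq> {0..<real L}" and Aj: "seg m j \<subseteq> {0..<real L}"
    and disj: "seg m i \<inter> seg m j = {}"
  shows "measure_pmf.prob (edge_pmf H \<tau> \<alpha> L n x) {e. good m n x e i \<and> good m n x e j}
     \<le> (\<Sum>k<n. \<Sum>l<n. if k \<noteq> l then indicator (seg m i) (x k) * indicator (seg m j) (x l) *
            (\<Prod>z\<in>{..<n} - {k, l}. psi H \<tau> \<alpha> L (x k) (x l) (x z)) else 0)"
proof -
  let ?h = "\<lambda>p. htilde H \<tau> \<alpha> L (x (fst p)) (x (snd p))"
  let ?pF = "\<lambda>p. measure_pmf.prob (bernoulli_pmf (?h p)) {False}"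
  define J where "J k l = {..<n} - {k, l}" for k l :: nat
  define pk where "pk k z = (min k z, max k z)" for k z :: nat
  define Pk where "Pk k l = pk k ` J k l \<union> pk l ` J k l" for k l
  define Ev where "Ev k l = (if k \<noteq> l \<and> x k \<in> seg m i \<and> x l \<in> seg m j then
      Pi (pairs n) (\<lambda>p. if p \<in> Pk k l then {False} else UNIV) else {})" for k l
  define bnd where "bnd k l = (if k \<noteq> l then indicator (seg m i) (x k) * indicator (seg m j) (x l) *
            (\<Prod>z\<in>{..<n} - {k, l}. psi H \<tau> \<alpha> L (x k) (x l) (x z)) else 0)" for k l
  have pkP: "pk k z \<in> pairs n" if "z \<in> J k l" "k < n" for k l z
    using that by (auto simp: pk_def pairs_def J_def)
  have PkP: "Pk k l \<subseteq> pairs n" if "k < n" "l < n" for k l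
    using that unfolding Pk_def J_def pk_def pairs_def by (auto simp: min_def max_def)
  have sub: "{e. good m n x e i \<and> good m n x e j} \<subseteq> (\<Union>kl\<in>{..<n} \<times> {..<n}. Ev (fst kl) (snd kl))"
  proof
    fix e assume "e \<in> {e. good m n x e i \<and> good m n x e j}"
    then obtain k l where k: "k < n" "{l. l < n \<and> x l \<in> seg m i} = {k}" "\<And>l. l < n \<Longrightarrow> l \<noteq> k \<Longrightarrow> \<not> adj e k l"
      and l: "l < n" "{l'. l' < n \<and> x l' \<in> seg m j} = {l}" "\<And>l'. l' < n \<Longrightarrow> l' \<noteq> l \<Longrightarrow> \<not> adj e l l'"
      unfolding good_def by blast
    have xk: "x k \<in> seg m i" using k(2) by blast
    have xl: "x l \<in> seg m j" using l(2) by blast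
    have kl: "k \<noteq> l" using xk xl disj by auto
    have "e \<in> Ev k l"
    proof -
      have "e p = False" if "p \<in> Pk k l" for p
      proof -
        from that obtain a z where az: "a \<in> {k, l}" "z \<in> J k l" "p = pk a z"
          unfolding Pk_def by auto
        have "z < n" "z \<noteq> a" using az kl unfolding J_def by auto
        have "\<not> adj e a z" using k(3) l(3) az \<open>z < n\<close> \<open>z \<noteq> a\<close> by auto
        then show ?thesis using az(3) \<open>z \<noteq> a\<close> unfolding adj_def pk_def
          by (auto split: if_splits simp: min_def max_def)
      qed
      then show ?thesis unfolding Ev_def using kl xk xl by (auto simp: Pi_def)
    qed
    then show "e \<in> (\<Union>kl\<in>{..<n} \<times> {..<n}. Ev (fst kl) (snd kl))" using k(1) l(1) by force
  qed
  have probEv: "measure_pmf.prob (edge_pmf H \<tau> \<alpha> L n x) (Ev k l) \<le> bnd k l"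
    if "k < n" "l < n" for k l
  proof (cases "k \<noteq> l \<and> x k \<in> seg m i \<and> x l \<in> seg m j")
    case False
    then have "Ev k l = {}" unfolding Ev_def by auto
    moreover have "bnd k l \<ge> 0" unfolding bnd_def
      by (auto intro!: mult_nonneg_nonneg prod_nonneg psi_range[OF range])
    ultimately show ?thesis by simp
  next
    case True
    then have kl: "k \<noteq> l" and xk: "x k \<in> {0..<real L}" and xl: "x l \<in> {0..<real L}"
      using Ai Aj by auto
    have fin: "finite (pairs n)"
      by (rule finite_subset[of _ "{..<n} \<times> {..<n}"]) (auto simp: pairs_def)
    have "measure_pmf.prob (edge_pmf H \<tau> \<alpha> L n x) (Ev k l) =
       (\<Prod>p\<in>pairs n. measure_pmf.prob (bernoulli_pmf (?h p)) (if p \<in> Pk k l then {False} else UNIV))"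
      unfolding Ev_def edge_pmf_def using True fin
      by (simp add: measure_Pi_pmf_Pi case_prod_beta)
    also have "\<dots> = (\<Prod>p\<in>Pk k l. ?pF p)"
      using PkP[OF that] fin by (intro prod.mono_neutral_cong_right) auto
    also have "\<dots> = (\<Prod>p\<in>pk k ` J k l. ?pF p) * (\<Prod>p\<in>pk l ` J k l. ?pF p)"
      unfolding Pk_def
    proof (rule prod.union_disjoint)
      show "finite (pk k ` J k l)" "finite (pk l ` J k l)" by (auto simp: J_def)
      show "pk k ` J k l \<inter> pk l ` J k l = {}"
        using kl by (auto simp: pk_def J_def min_def max_def split: if_splits)
    qed
    also have "\<dots> = (\<Prod>z\<in>J k l. ?pF (pk k z)) * (\<Prod>z\<in>J k l. ?pF (pk l z))"
    proof -
      have "inj_on (pk a) (J k l)" if "a \<in> {k, l}" for a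
        using that by (auto simp: inj_on_def pk_def J_def min_def max_def split: if_splits)
      then show ?thesis by (simp add: prod.reindex)
    qed
    also have "\<dots> = (\<Prod>z\<in>J k l. ?pF (pk k z) * ?pF (pk l z))"
      by (simp add: prod.distrib)
    also have "\<dots> \<le> (\<Prod>z\<in>J k l. psi H \<tau> \<alpha> L (x k) (x l) (x z))"
    proof (rule prod_mono, rule conjI)
      fix z assume z: "z \<in> J k l"
      have hsym: "?h (pk a z) = htilde H \<tau> \<alpha> L (x a) (x z)" for a
        unfolding pk_def htilde_def by (auto simp: min_def max_def rhoL_sym)
      show "0 \<le> ?pF (pk k z) * ?pF (pk l z)" by simp
      show "?pF (pk k z) * ?pF (pk l z) \<le> psi H \<tau> \<alpha> L (x k) (x l) (x z)"
      proof (cases "x z \<in> {0..<real L}")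
        case True
        have e1: "htilde H \<tau> \<alpha> L (x a) (x z) = hh H \<tau> \<alpha> L (rhoL (real L) (x a) (x z))"
          if "x a \<in> {0..<real L}" for a
          using htilde_eq[OF range R that True] .
        show ?thesis unfolding psi_def using True e1[OF xk] e1[OF xl] hsym[of k] hsym[of l]
          by (simp add: prob_bern_False hh_range[OF range])
      next
        case False
        then have "psi H \<tau> \<alpha> L (x k) (x l) (x z) = 1" unfolding psi_def by (simp only: if_False if_not_P[OF False])
        then show ?thesis
          by (simp add: mult_le_one measure_pmf.prob_le_1)
      qed
    qed
    also have "\<dots> = bnd k l" unfolding bnd_def J_def using True by simp
    finally show ?thesis .
  qed
  have "measure_pmf.prob (edge_pmf H \<tau> \<alpha> L n x) {e. good m n x e i \<and> good m n x e j}
      \<le> measure_pmf.prob (edge_pmf H \<tau> \<alpha> L n x) (\<Union>kl\<in>{..<n} \<times> {..<n}. Ev (fst kl) (snd kl))"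
    by (rule measure_pmf.finite_measure_mono[OF sub]) simp
  also have "\<dots> \<le> (\<Sum>kl\<in>{..<n} \<times> {..<n}. measure_pmf.prob (edge_pmf H \<tau> \<alpha> L n x) (Ev (fst kl) (snd kl)))"
    by (rule measure_pmf.finite_measure_subadditive_finite) auto
  also have "\<dots> \<le> (\<Sum>kl\<in>{..<n} \<times> {..<n}. bnd (fst kl) (snd kl))"
    by (rule sum_mono) (auto intro: probEv)
  also have "\<dots> = (\<Sum>k<n. \<Sum>l<n. bnd k l)"
    by (simp add: sum.cartesian_product case_prod_beta)
  finally show ?thesis unfolding bnd_def .
qed


lemma Hp_meas: "set_borel_measurable lborel {0..} H \<Longrightarrow> Hp H \<in> borel_measurable borel"
  unfolding set_borel_measurable_def Hp_def by simp

lemma psi_meas[measurable]: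
  assumes "Hp H \<in> borel_measurable borel"
   and [measurable]: "f \<in> borel_measurable M" "g \<in> borel_measurable M" "h \<in> borel_measurable M"
  shows "(\<lambda>x. psi H \<tau> \<alpha> L (f x) (g x) (h x)) \<in> borel_measurable M"
proof -
  note [measurable] = measurable_compose[OF _ assms(1)]
  show ?thesis unfolding psi_def hh_def rhoL_def by measurable
qed

lemma PiM_bound:
  fixes H :: "real \<Rightarrow> real" and L n k l :: nat and Ai Aj :: "real set" and Q :: real
  defines "U \<equiv> uniform_measure lborel {0..<real L}"
  assumes Hm: "Hp H \<in> borel_measurable borel"
    and range: "\<And>x. x \<ge> 0 \<Longrightarrow> 0 \<le> H x \<and> H x \<le> 1"
    and L: "L > 0" and kl: "k \<noteq> l" "k < n" "l < n"
    and Ai: "Ai \<in> sets borel" and Aj: "Aj \<in> sets borel"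
    and Q: "Q \<ge> 0" "\<And>a b. a \<in> Ai \<Longrightarrow> b \<in> Aj \<Longrightarrow> (\<integral>\<^sup>+t. ennreal (psi H \<tau> \<alpha> L a b t) \<partial>U) \<le> ennreal Q"
  shows "(\<integral>\<^sup>+x. ennreal (indicator Ai (x k) * indicator Aj (x l) *
            (\<Prod>z\<in>{..<n} - {k, l}. psi H \<tau> \<alpha> L (x k) (x l) (x z))) \<partial>PiM {..<n} (\<lambda>_. U))
     \<le> emeasure U Ai * emeasure U Aj * ennreal Q ^ (n - 2)"
proof -
  have "prob_space U" unfolding U_def using L
    by (intro prob_space_uniform_measure) auto
  then interpret U: prob_space U .
  interpret P: product_sigma_finite "\<lambda>_. U"
    unfolding product_sigma_finite_def using U.sigma_finite_measure_axioms by simp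
  define I where "I = {k, l}"
  define J where "J = {..<n} - {k, l}"
  have IJ: "I \<inter> J = {}" "finite I" "finite J" "I \<union> J = {..<n}"
    using kl by (auto simp: I_def J_def)
  have cardJ: "card J = n - 2" using kl unfolding J_def
    by (subst card_Diff_subset) auto
  note [measurable] = Hm Ai Aj
  let ?f = "\<lambda>x. ennreal (indicator Ai (x k) * indicator Aj (x l) *
            (\<Prod>z\<in>J. psi H \<tau> \<alpha> L (x k) (x l) (x z)))"
  have c: "(\<lambda>x. x z) \<in> borel_measurable (PiM {..<n} (\<lambda>_. U))" if "z < n" for z
    using measurable_component_singleton[of z "{..<n}" "\<lambda>_. U"] that
    unfolding U_def by (simp cong: measurable_cong_sets)
  have fm: "?f \<in> borel_measurable (PiM (I \<union> J) (\<lambda>_. U))"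
    unfolding IJ(4)
  proof (intro measurable_compose[OF _ measurable_ennreal] borel_measurable_times borel_measurable_prod)
    show "(\<lambda>x. indicator Ai (x k) :: real) \<in> borel_measurable (PiM {..<n} (\<lambda>_. U))"
      using c[OF kl(2)] by measurable
    show "(\<lambda>x. indicator Aj (x l) :: real) \<in> borel_measurable (PiM {..<n} (\<lambda>_. U))"
      using c[OF kl(3)] by measurable
    fix z assume "z \<in> J"
    then have "z < n" by (simp add: J_def)
    show "(\<lambda>x. psi H \<tau> \<alpha> L (x k) (x l) (x z)) \<in> borel_measurable (PiM {..<n} (\<lambda>_. U))"
      by (rule psi_meas[OF Hm c[OF kl(2)] c[OF kl(3)] c[OF \<open>z < n\<close>]])
  qed
  have "(\<integral>\<^sup>+x. ?f x \<partial>PiM (I \<union> J) (\<lambda>_. U)) =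
     (\<integral>\<^sup>+x. (\<integral>\<^sup>+y. ?f (merge I J (x, y)) \<partial>PiM J (\<lambda>_. U)) \<partial>PiM I (\<lambda>_. U))"
    by (rule P.product_nn_integral_fold[OF IJ(1-3) fm])
  also have "\<dots> \<le> (\<integral>\<^sup>+x. ennreal (indicator Ai (x k) * indicator Aj (x l)) * ennreal Q ^ (n - 2) \<partial>PiM I (\<lambda>_. U))"
  proof (rule nn_integral_mono)
    fix x assume x: "x \<in> space (PiM I (\<lambda>_. U))"
    have mk: "merge I J (x, y) k = x k" "merge I J (x, y) l = x l" for y
      by (auto simp: merge_def I_def)
    have mz: "merge I J (x, y) z = y z" if "z \<in> J" for y z
      using that IJ(1) by (auto simp: merge_def)
    have "(\<integral>\<^sup>+y. ?f (merge I J (x, y)) \<partial>PiM J (\<lambda>_. U)) =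
       (\<integral>\<^sup>+y. ennreal (indicator Ai (x k) * indicator Aj (x l)) * (\<Prod>z\<in>J. ennreal (psi H \<tau> \<alpha> L (x k) (x l) (y z))) \<partial>PiM J (\<lambda>_. U))"
      by (intro nn_integral_cong)
         (simp add: mk mz ennreal_mult' prod_ennreal psi_range[OF range] prod_nonneg cong: prod.cong)
    also have "\<dots> = ennreal (indicator Ai (x k) * indicator Aj (x l)) *
        (\<integral>\<^sup>+y. (\<Prod>z\<in>J. ennreal (psi H \<tau> \<alpha> L (x k) (x l) (y z))) \<partial>PiM J (\<lambda>_. U))"
      by (rule nn_integral_cmult) (unfold U_def, measurable)
    also have "(\<integral>\<^sup>+y. (\<Prod>z\<in>J. ennreal (psi H \<tau> \<alpha> L (x k) (x l) (y z))) \<partial>PiM J (\<lambda>_. U))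
        = (\<Prod>z\<in>J. (\<integral>\<^sup>+t. ennreal (psi H \<tau> \<alpha> L (x k) (x l) t) \<partial>U))"
      by (rule P.product_nn_integral_prod[OF IJ(3)]) (unfold U_def, measurable)
    finally have eq: "(\<integral>\<^sup>+y. ?f (merge I J (x, y)) \<partial>PiM J (\<lambda>_. U)) = 
       ennreal (indicator Ai (x k) * indicator Aj (x l)) * (\<Prod>z\<in>J. (\<integral>\<^sup>+t. ennreal (psi H \<tau> \<alpha> L (x k) (x l) t) \<partial>U))" .
    show "(\<integral>\<^sup>+y. ?f (merge I J (x, y)) \<partial>PiM J (\<lambda>_. U)) \<le> ennreal (indicator Ai (x k) * indicator Aj (x l)) * ennreal Q ^ (n - 2)"
    proof (cases "x k \<in> Ai \<and> x l \<in> Aj")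
      case True
      have "(\<Prod>z\<in>J. (\<integral>\<^sup>+t. ennreal (psi H \<tau> \<alpha> L (x k) (x l) t) \<partial>U)) \<le> (\<Prod>z\<in>J. ennreal Q)"
        by (rule prod_mono_ennreal) (use True Q(2) in auto)
      then show ?thesis unfolding eq using True cardJ by (simp add: prod_constant)
    next
      case False
      then show ?thesis unfolding eq by (auto simp: indicator_def)
    qed
  qed
  also have "\<dots> = (\<integral>\<^sup>+x. ennreal (indicator Ai (x k) * indicator Aj (x l)) \<partial>PiM I (\<lambda>_. U)) * ennreal Q ^ (n - 2)"
    by (rule nn_integral_multc) (unfold U_def I_def, measurable)
  also have "(\<integral>\<^sup>+x. ennreal (indicator Ai (x k) * indicator Aj (x l)) \<partial>PiM I (\<lambda>_. U))
     = (\<integral>\<^sup>+x. (\<Prod>z\<in>I. (\<lambda>t. indicator (if z = k then Ai else Aj) t :: ennreal) (x z)) \<partial>PiM I (\<lambda>_. U))"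
    using kl by (intro nn_integral_cong) (simp add: I_def indicator_def)
  also have "\<dots> = (\<Prod>z\<in>I. (\<integral>\<^sup>+t. indicator (if z = k then Ai else Aj) t \<partial>U))"
    by (rule P.product_nn_integral_prod[OF IJ(2)]) (unfold U_def I_def, measurable)
  also have "\<dots> = emeasure U Ai * emeasure U Aj"
    using kl Ai Aj by (simp add: I_def U_def)
  finally show ?thesis using IJ(4) unfolding J_def by simp
qed


lemma shift_nn: 
  fixes f :: "real \<Rightarrow> ennreal"
  assumes [measurable]: "f \<in> borel_measurable borel" "S \<in> sets borel"
  shows "(\<integral>\<^sup>+x. f x * indicator S x \<partial>lborel) = (\<integral>\<^sup>+x. f (t + x) * indicator S (t + x) \<partial>lborel)"
  using nn_integral_real_affine[of "\<lambda>x. f x * indicator S x" 1 t] by simp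

lemma refl_nn: 
  fixes f :: "real \<Rightarrow> ennreal"
  assumes [measurable]: "f \<in> borel_measurable borel" "S \<in> sets borel"
  shows "(\<integral>\<^sup>+x. f x * indicator S x \<partial>lborel) = (\<integral>\<^sup>+x. f (t - x) * indicator S (t - x) \<partial>lborel)"
  using nn_integral_real_affine[of "\<lambda>x. f x * indicator S x" "-1" t] by simp

lemma torus_lower:
  fixes g :: "real \<Rightarrow> real" and L a T :: real
  assumes gm[measurable]: "g \<in> borel_measurable borel"
    and a: "0 \<le> a" "a < L" and T: "0 \<le> T" "2 * T \<le> L"
  shows "(\<integral>\<^sup>+z. ennreal (g (rhoL L a z)) * indicator {0..<L} z \<partial>lborel)
     \<ge> 2 * (\<integral>\<^sup>+d. ennreal (g d) * indicator {0<..<T} d \<partial>lborel)"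
proof -
  define K where "K d = ennreal (g (min d (L - d)))" for d
  define G where "G z = ennreal (g (rhoL L a z))" for z
  have Gm[measurable]: "G \<in> borel_measurable borel" unfolding G_def rhoL_def by measurable
  have Km[measurable]: "K \<in> borel_measurable borel" unfolding K_def by measurable
  have "(\<integral>\<^sup>+z. G z * indicator {0..<L} z \<partial>lborel)
      = (\<integral>\<^sup>+z. G z * indicator {0..<a} z + G z * indicator {a..<L} z \<partial>lborel)"
    using a by (intro nn_integral_cong) (auto simp: indicator_def)
  also have "\<dots> = (\<integral>\<^sup>+z. G z * indicator {0..<a} z \<partial>lborel) + (\<integral>\<^sup>+z. G z * indicator {a..<L} z \<partial>lborel)"
    by (rule nn_integral_add) auto
  also have "(\<integral>\<^sup>+z. G z * indicator {0..<a} z \<partial>lborel) = (\<integral>\<^sup>+d. K d * indicator {L-a..<L} d \<partial>lborel)"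
  proof -
    have "(\<integral>\<^sup>+z. G z * indicator {0..<a} z \<partial>lborel) = (\<integral>\<^sup>+d. G (a - L + d) * indicator {0..<a} (a - L + d) \<partial>lborel)"
      by (rule shift_nn) auto
    also have "\<dots> = (\<integral>\<^sup>+d. K d * indicator {L-a..<L} d \<partial>lborel)"
      by (intro nn_integral_cong) (auto simp: indicator_def G_def K_def rhoL_def abs_if min_def)
    finally show ?thesis .
  qed
  also have "(\<integral>\<^sup>+z. G z * indicator {a..<L} z \<partial>lborel) = (\<integral>\<^sup>+d. K d * indicator {0..<L-a} d \<partial>lborel)"
  proof -
    have "(\<integral>\<^sup>+z. G z * indicator {a..<L} z \<partial>lborel) = (\<integral>\<^sup>+d. G (a + d) * indicator {a..<L} (a + d) \<partial>lborel)"
      by (rule shift_nn) auto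
    also have "\<dots> = (\<integral>\<^sup>+d. K d * indicator {0..<L-a} d \<partial>lborel)"
      by (intro nn_integral_cong) (auto simp: indicator_def G_def K_def rhoL_def abs_if min_def)
    finally show ?thesis .
  qed
  also have "(\<integral>\<^sup>+d. K d * indicator {L-a..<L} d \<partial>lborel) + (\<integral>\<^sup>+d. K d * indicator {0..<L-a} d \<partial>lborel)
      = (\<integral>\<^sup>+d. K d * indicator {L-a..<L} d + K d * indicator {0..<L-a} d \<partial>lborel)"
    by (rule nn_integral_add[symmetric]) auto
  also have "\<dots> \<ge> (\<integral>\<^sup>+d. K d * indicator {0<..<T} d + K d * indicator {L-T<..<L} d \<partial>lborel)"
    using a T by (intro nn_integral_mono) (auto simp: indicator_def)
  finally have 1: "(\<integral>\<^sup>+z. G z * indicator {0..<L} z \<partial>lborel) \<ge>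
      (\<integral>\<^sup>+d. K d * indicator {0<..<T} d \<partial>lborel) + (\<integral>\<^sup>+d. K d * indicator {L-T<..<L} d \<partial>lborel)"
    by (subst (asm) nn_integral_add) auto
  have 2: "(\<integral>\<^sup>+d. K d * indicator {0<..<T} d \<partial>lborel) = (\<integral>\<^sup>+d. ennreal (g d) * indicator {0<..<T} d \<partial>lborel)"
    using T by (intro nn_integral_cong) (auto simp: indicator_def K_def min_def)
  have 3: "(\<integral>\<^sup>+d. K d * indicator {L-T<..<L} d \<partial>lborel) = (\<integral>\<^sup>+d. ennreal (g d) * indicator {0<..<T} d \<partial>lborel)"
  proof -
    have "(\<integral>\<^sup>+d. K d * indicator {L-T<..<L} d \<partial>lborel) = (\<integral>\<^sup>+d. K (L - d) * indicator {L-T<..<L} (L - d) \<partial>lborel)"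
      by (rule refl_nn) auto
    also have "\<dots> = (\<integral>\<^sup>+d. ennreal (g d) * indicator {0<..<T} d \<partial>lborel)"
      using T by (intro nn_integral_cong) (auto simp: indicator_def K_def min_def)
    finally show ?thesis .
  qed
  show ?thesis using 1 unfolding 2 3 G_def by (simp add: mult_2)
qed


lemma H2_integrable:
  fixes H :: "real \<Rightarrow> real"
  assumes meas: "set_borel_measurable lborel {0..} H"
    and range: "\<And>x. x \<ge> 0 \<Longrightarrow> 0 \<le> H x \<and> H x \<le> 1"
    and int1: "set_integrable lborel {0..} H"
  shows "set_integrable lborel {0..} (\<lambda>s. (H s)\<^sup>2)"
proof (rule set_integrable_bound[OF int1])
  have "(\<lambda>x. indicator {0..} x *\<^sub>R (H x)\<^sup>2) = (\<lambda>x. (indicator {0..} x *\<^sub>R H x)\<^sup>2 :: real)"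
    by (auto simp: indicator_def fun_eq_iff)
  then show "set_borel_measurable lborel {0..} (\<lambda>s. (H s)\<^sup>2)"
    using meas unfolding set_borel_measurable_def by simp
  show "AE x in lborel. x \<in> {0..} \<longrightarrow> norm ((H x)\<^sup>2) \<le> norm (H x)"
  proof (rule AE_I2, rule impI)
    fix x :: real assume "x \<in> {0..}"
    then have "0 \<le> H x" "H x \<le> 1" using range[of x] by auto
    then have "(H x)\<^sup>2 \<le> H x" using mult_right_mono[of "H x" 1 "H x"] by (simp add: power2_eq_square)
    then show "norm ((H x)\<^sup>2) \<le> norm (H x)" using \<open>0 \<le> H x\<close> by simp
  qed
qed

lemma phi_integrable:
  fixes H :: "real \<Rightarrow> real"
  assumes meas: "set_borel_measurable lborel {0..} H"
    and range: "\<And>x. x \<ge> 0 \<Longrightarrow> 0 \<le> H x \<and> H x \<le> 1"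
    and int1: "set_integrable lborel {0..} H"
  shows "set_integrable lborel {0..} (\<lambda>s. H s - (H s)\<^sup>2 / 2)"
    and "(LBINT s:{0..}. H s - (H s)\<^sup>2 / 2) = norm1 H - norm2sq H / 2"
proof -
  have i2: "set_integrable lborel {0..} (\<lambda>s. (H s)\<^sup>2 / 2)"
    using H2_integrable[OF assms] by (simp add: set_integrable_divide)
  show "set_integrable lborel {0..} (\<lambda>s. H s - (H s)\<^sup>2 / 2)"
    using int1 i2 by (rule set_integral_diff)
  have "(LBINT s:{0..}. H s - (H s)\<^sup>2 / 2) = (LBINT s:{0..}. H s) - (LBINT s:{0..}. (H s)\<^sup>2 / 2)"
    using int1 i2 by (rule set_integral_diff)
  also have "(LBINT s:{0..}. (H s)\<^sup>2 / 2) = (LBINT s:{0..}. (H s)\<^sup>2) / 2"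
    by (rule set_integral_divide_zero)
  finally show "(LBINT s:{0..}. H s - (H s)\<^sup>2 / 2) = norm1 H - norm2sq H / 2"
    by (simp add: norm1_def norm2sq_def)
qed

lemma Phi_lim:
  fixes H :: "real \<Rightarrow> real"
  assumes meas: "set_borel_measurable lborel {0..} H"
    and range: "\<And>x. x \<ge> 0 \<Longrightarrow> 0 \<le> H x \<and> H x \<le> 1"
    and int1: "set_integrable lborel {0..} H"
  shows "((\<lambda>M. LBINT s:{0..M}. H s - (H s)\<^sup>2 / 2) \<longlongrightarrow> norm1 H - norm2sq H / 2) at_top"
proof -
  have "((\<lambda>M. LBINT s:{0..M}. H s - (H s)\<^sup>2 / 2) \<longlongrightarrow> (LBINT s:{0..}. H s - (H s)\<^sup>2 / 2)) at_top"
    by (rule tendsto_set_lebesgue_integral_at_top) (auto intro: phi_integrable(1)[OF assms])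
  then show ?thesis using phi_integrable(2)[OF assms] by simp
qed

lemma N_eq:
  fixes H :: "real \<Rightarrow> real"
  assumes meas: "set_borel_measurable lborel {0..} H"
    and range: "\<And>x. x \<ge> 0 \<Longrightarrow> 0 \<le> H x \<and> H x \<le> 1"
    and int1: "set_integrable lborel {0..} H"
    and M: "M \<ge> 0"
  shows "(\<integral>\<^sup>+s. ennreal (Hp H s - (Hp H s)\<^sup>2 / 2) * indicator {0<..<M} s \<partial>lborel)
      = ennreal (LBINT s:{0..M}. H s - (H s)\<^sup>2 / 2)"
proof -
  have si: "set_integrable lborel {0..M} (\<lambda>s. H s - (H s)\<^sup>2 / 2)"
    by (rule set_integrable_subset[OF phi_integrable(1)[OF assms(1-3)]]) auto
  have "(\<integral>\<^sup>+s. ennreal (Hp H s - (Hp H s)\<^sup>2 / 2) * indicator {0<..<M} s \<partial>lborel)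
      = (\<integral>\<^sup>+s. ennreal (indicator {0..M} s *\<^sub>R (H s - (H s)\<^sup>2 / 2)) \<partial>lborel)"
  proof (rule nn_integral_cong_AE)
    show "AE s in lborel. ennreal (Hp H s - (Hp H s)\<^sup>2 / 2) * indicator {0<..<M} s =
        ennreal (indicator {0..M} s *\<^sub>R (H s - (H s)\<^sup>2 / 2))"
      using AE_lborel_singleton[of 0] AE_lborel_singleton[of M]
    proof eventually_elim
      case (elim s)
      show ?case
      proof (cases "s \<in> {0<..<M}")
        case True
        then show ?thesis by (simp add: Hp_def)
      next
        case False
        then have "s \<notin> {0..M}" using elim by auto
        then have "indicator {0..M} s = (0::real)" by simp
        moreover have "indicator {0<..<M} s = (0::ennreal)" using False by simp
        ultimately show ?thesis by (simp only: mult_zero_right scale_zero_left ennreal_0)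
      qed
    qed
  qed
  also have "\<dots> = ennreal (LBINT s:{0..M}. H s - (H s)\<^sup>2 / 2)"
    unfolding set_lebesgue_integral_def
  proof (rule nn_integral_eq_integral)
    show "integrable lborel (\<lambda>s. indicator {0..M} s *\<^sub>R (H s - (H s)\<^sup>2 / 2))"
      using si unfolding set_integrable_def .
    show "AE x in lborel. 0 \<le> indicator {0..M} x *\<^sub>R (H x - (H x)\<^sup>2 / 2)"
    proof (rule AE_I2)
      fix x
      show "0 \<le> indicator {0..M} x *\<^sub>R (H x - (H x)\<^sup>2 / 2)"
      proof (cases "x \<in> {0..M}")
        case True
        then have "0 \<le> H x" "H x \<le> 1" using range[of x] by auto
        then have "(H x)\<^sup>2 \<le> H x" using mult_right_mono[of "H x" 1 "H x"] by (simp add: power2_eq_square)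
        then show ?thesis using True \<open>0 \<le> H x\<close> by simp
      qed simp
    qed
  qed
  finally show ?thesis .
qed


lemma ghat_nonneg: "0 \<le> x \<Longrightarrow> x \<le> (1::real) \<Longrightarrow> 0 \<le> x - x\<^sup>2 / 2"
  by (simp add: power2_eq_square) (smt (verit) mult_left_le_one_le)

lemma q_bound:
  fixes H :: "real \<Rightarrow> real" and L :: nat and \<tau> \<alpha> a b :: real
  defines "U \<equiv> uniform_measure lborel {0..<real L}"
  defines "R \<equiv> RL H \<tau> L"
  defines "T \<equiv> RL H \<tau> L powr (1 + 1 / \<alpha>)"
  defines "\<Phi> \<equiv> LBINT s:{0..T/R}. H s - (H s)\<^sup>2 / 2"
  assumes meas: "set_borel_measurable lborel {0..} H"
    and range: "\<And>x. x \<ge> 0 \<Longrightarrow> 0 \<le> H x \<and> H x \<le> 1"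
    and int1: "set_integrable lborel {0..} H"
    and L: "L > 0" and R: "R > 0" and T: "2 * T \<le> real L"
    and a: "a \<in> {0..<real L}" and b: "b \<in> {0..<real L}"
  shows "(\<integral>\<^sup>+t. ennreal (psi H \<tau> \<alpha> L a b t) \<partial>U) \<le> ennreal (1 - 4 * R * \<Phi> / real L)"
    and "0 \<le> 1 - 4 * R * \<Phi> / real L"
proof -
  have Hm[measurable]: "Hp H \<in> borel_measurable borel"
    using meas unfolding set_borel_measurable_def Hp_def by simp
  have "prob_space U" unfolding U_def using L
    by (intro prob_space_uniform_measure) auto
  then interpret U: prob_space U .
  have T0: "0 \<le> T" unfolding T_def by simp
  define g where "g r = hh H \<tau> \<alpha> L r - (hh H \<tau> \<alpha> L r)\<^sup>2 / 2" for r
  have gm[measurable]: "g \<in> borel_measurable borel"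
    unfolding g_def hh_def by measurable
  have g0: "0 \<le> g r" for r unfolding g_def by (intro ghat_nonneg hh_range[OF range])
  define gh where "gh c t = (if t \<in> {0..<real L} then g (rhoL (real L) c t) else 0)" for c t
  have ghm[measurable]: "gh c \<in> borel_measurable borel" for c
    unfolding gh_def rhoL_def by measurable
  have gh0: "0 \<le> gh c t" for c t unfolding gh_def using g0 by simp
  have Phi0: "0 \<le> \<Phi>" unfolding \<Phi>_def set_lebesgue_integral_def
  proof (rule integral_nonneg_AE, rule AE_I2)
    fix x show "0 \<le> indicator {0..T / R} x *\<^sub>R (H x - (H x)\<^sup>2 / 2)"
    proof (cases "x \<in> {0..T/R}")
      case True
      then have "0 \<le> H x" "H x \<le> 1" using range[of x] by auto
      then show ?thesis using True ghat_nonneg by simp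
    qed simp
  qed
  have low: "(\<integral>\<^sup>+t. ennreal (gh c t) \<partial>U) \<ge> ennreal (2 * R * \<Phi> / real L)" if c: "c \<in> {0..<real L}" for c
  proof -
    have "(\<integral>\<^sup>+t. ennreal (gh c t) \<partial>U) = (\<integral>\<^sup>+t. ennreal (gh c t) * indicator {0..<real L} t \<partial>lborel) / emeasure lborel {0..<real L}"
      unfolding U_def by (rule nn_integral_uniform_measure) auto
    also have "(\<integral>\<^sup>+t. ennreal (gh c t) * indicator {0..<real L} t \<partial>lborel) = (\<integral>\<^sup>+t. ennreal (g (rhoL (real L) c t)) * indicator {0..<real L} t \<partial>lborel)"
      by (intro nn_integral_cong) (auto simp: gh_def indicator_def)
    also have "emeasure lborel {0..<real L} = ennreal (real L)" by simp
    finally have eq: "(\<integral>\<^sup>+t. ennreal (gh c t) \<partial>U) = (\<integral>\<^sup>+t. ennreal (g (rhoL (real L) c t)) * indicator {0..<real L} t \<partial>lborel) / ennreal (real L)" .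
    have "(\<integral>\<^sup>+t. ennreal (g (rhoL (real L) c t)) * indicator {0..<real L} t \<partial>lborel)
       \<ge> 2 * (\<integral>\<^sup>+d. ennreal (g d) * indicator {0<..<T} d \<partial>lborel)"
      using c T T0 by (intro torus_lower) auto
    also have "(\<integral>\<^sup>+d. ennreal (g d) * indicator {0<..<T} d \<partial>lborel)
        = ennreal R * (\<integral>\<^sup>+s. ennreal (g (0 + R * s)) * indicator {0<..<T} (0 + R * s) \<partial>lborel)"
      using nn_integral_real_affine[of "\<lambda>d. ennreal (g d) * indicator {0<..<T} d" R 0] R by simp
    also have "(\<integral>\<^sup>+s. ennreal (g (0 + R * s)) * indicator {0<..<T} (0 + R * s) \<partial>lborel)
       = (\<integral>\<^sup>+s. ennreal (Hp H s - (Hp H s)\<^sup>2 / 2) * indicator {0<..<T/R} s \<partial>lborel)"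
    proof (intro nn_integral_cong)
      fix s :: real
      have iff: "(0 < R * s \<and> R * s < T) = (0 < s \<and> s < T / R)"
        using R by (simp add: zero_less_mult_iff pos_less_divide_eq mult.commute)
      show "ennreal (g (0 + R * s)) * indicator {0<..<T} (0 + R * s) =
          ennreal (Hp H s - (Hp H s)\<^sup>2 / 2) * indicator {0<..<T / R} s"
      proof (cases "0 < s \<and> s < T / R")
        case True
        then have "R * s \<le> T" using iff by auto
        then have "hh H \<tau> \<alpha> L (R * s) = Hp H s" unfolding hh_def T_def R_def using R
          by (simp add: R_def)
        then show ?thesis using True iff by (simp add: g_def)
      next
        case False
        then have "indicator {0<..<T} (0 + R * s) = (0::ennreal)" "indicator {0<..<T/R} s = (0::ennreal)"
          using iff by (auto simp: indicator_def)
        then show ?thesis by (simp only: mult_zero_right)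
      qed
    qed
    also have "\<dots> = ennreal \<Phi>"
      unfolding \<Phi>_def by (intro N_eq[OF meas range int1] divide_nonneg_pos[OF T0 R])
    finally have "(\<integral>\<^sup>+t. ennreal (g (rhoL (real L) c t)) * indicator {0..<real L} t \<partial>lborel)
       \<ge> 2 * (ennreal R * ennreal \<Phi>)" by simp
    then have "(\<integral>\<^sup>+t. ennreal (gh c t) \<partial>U) \<ge> 2 * (ennreal R * ennreal \<Phi>) / ennreal (real L)"
      unfolding eq by (intro divide_right_mono_ennreal)
    also have "2 * (ennreal R * ennreal \<Phi>) / ennreal (real L) = ennreal (2 * R * \<Phi> / real L)"
    proof -
      have "ennreal (2 * R * \<Phi>) = ennreal 2 * ennreal R * ennreal \<Phi>"
        using R Phi0 by (simp add: ennreal_mult)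
      then have "2 * (ennreal R * ennreal \<Phi>) = ennreal (2 * R * \<Phi>)" by (simp add: mult.assoc)
      then show ?thesis using L R Phi0 by (simp add: divide_ennreal)
    qed
    finally show ?thesis .
  qed
  have sum1: "(\<integral>\<^sup>+t. ennreal (psi H \<tau> \<alpha> L a b t) \<partial>U) + (\<integral>\<^sup>+t. ennreal (gh a t) \<partial>U) + (\<integral>\<^sup>+t. ennreal (gh b t) \<partial>U) \<le> 1"
  proof -
    have pm: "(\<lambda>t. psi H \<tau> \<alpha> L a b t) \<in> borel_measurable borel"
      by (rule psi_meas[OF Hm]) auto
    have "(\<integral>\<^sup>+t. ennreal (psi H \<tau> \<alpha> L a b t) \<partial>U) + (\<integral>\<^sup>+t. ennreal (gh a t) \<partial>U) + (\<integral>\<^sup>+t. ennreal (gh b t) \<partial>U)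
       = (\<integral>\<^sup>+t. ennreal (psi H \<tau> \<alpha> L a b t) + ennreal (gh a t) + ennreal (gh b t) \<partial>U)"
      using pm unfolding U_def by (simp add: nn_integral_add)
    also have "\<dots> \<le> (\<integral>\<^sup>+t. 1 \<partial>U)"
    proof (rule nn_integral_mono)
      fix t
      have "psi H \<tau> \<alpha> L a b t + gh a t + gh b t \<le> 1"
      proof (cases "t \<in> {0..<real L}")
        case True
        define x where "x = hh H \<tau> \<alpha> L (rhoL (real L) a t)"
        define y where "y = hh H \<tau> \<alpha> L (rhoL (real L) b t)"
        have "psi H \<tau> \<alpha> L a b t + gh a t + gh b t = 1 - (x - y)\<^sup>2 / 2"
          using True unfolding psi_def gh_def g_def x_def[symmetric] y_def[symmetric]
          by (simp add: power2_eq_square field_simps)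
        then show ?thesis by simp
      next
        case False
        then show ?thesis unfolding psi_def gh_def if_not_P[OF False] by simp
      qed
      then show "ennreal (psi H \<tau> \<alpha> L a b t) + ennreal (gh a t) + ennreal (gh b t) \<le> 1"
        using psi_range[OF range] gh0 by (simp add: ennreal_plus[symmetric] del: ennreal_plus)
    qed
    also have "\<dots> = 1" using U.emeasure_space_1 by simp
    finally show ?thesis .
  qed
  define w where "w = 2 * R * \<Phi> / real L"
  have w0: "0 \<le> w" unfolding w_def using R Phi0 by simp
  have sumw: "(\<integral>\<^sup>+t. ennreal (psi H \<tau> \<alpha> L a b t) \<partial>U) + ennreal w + ennreal w \<le> 1"
    using sum1 low[OF a] low[OF b] unfolding w_def[symmetric]
    by (meson add_mono order.trans order_refl)
  moreover obtain A where A: "(\<integral>\<^sup>+t. ennreal (psi H \<tau> \<alpha> L a b t) \<partial>U) = ennreal A" "0 \<le> A"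
  proof -
    have "(\<integral>\<^sup>+t. ennreal (psi H \<tau> \<alpha> L a b t) \<partial>U) \<le> (\<integral>\<^sup>+t. ennreal (psi H \<tau> \<alpha> L a b t) \<partial>U) + ennreal w + ennreal w"
      by (simp add: add.assoc)
    then have le1: "(\<integral>\<^sup>+t. ennreal (psi H \<tau> \<alpha> L a b t) \<partial>U) \<le> 1"
      using sumw by (rule order_trans)
    show ?thesis
    proof (cases "(\<integral>\<^sup>+t. ennreal (psi H \<tau> \<alpha> L a b t) \<partial>U)" rule: ennreal_cases)
      case (real r)
      then show ?thesis using that by blast
    next
      case top
      then show ?thesis using le1 by (simp add: top_unique)
    qed
  qed
  have e: "ennreal (A + w + w) = ennreal A + ennreal w + ennreal w"
    using A(2) w0 by (metis add_nonneg_nonneg ennreal_plus)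
  have "ennreal (A + w + w) \<le> 1" unfolding e using sumw A(1) by simp
  then have Aw: "A + w + w \<le> 1" by (simp only: ennreal_le_1)
  then show "(\<integral>\<^sup>+t. ennreal (psi H \<tau> \<alpha> L a b t) \<partial>U) \<le> ennreal (1 - 4 * R * \<Phi> / real L)"
    unfolding A(1) using w_def by (intro ennreal_leI) (simp add: field_simps)
  show "0 \<le> 1 - 4 * R * \<Phi> / real L" using Aw A(2) unfolding w_def by (simp add: field_simps)
qed


lemma poisson_sum:
  fixes L Q :: real
  shows "(\<lambda>n. L ^ n / fact n * exp (- L) * (real n * (real n - 1) * Q ^ (n - 2)))
     sums (L\<^sup>2 * exp (- L) * exp (L * Q))"
proof -
  let ?g = "\<lambda>n. L ^ n / fact n * exp (- L) * (real n * (real n - 1) * Q ^ (n - 2))"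
  have "(\<lambda>n. (L * Q) ^ n /\<^sub>R fact n) sums exp (L * Q)" by (rule exp_converges)
  then have "(\<lambda>n. L\<^sup>2 * exp (- L) * ((L * Q) ^ n /\<^sub>R fact n)) sums (L\<^sup>2 * exp (- L) * exp (L * Q))"
    by (rule sums_mult)
  moreover have "?g (Suc (Suc n)) = L\<^sup>2 * exp (- L) * ((L * Q) ^ n /\<^sub>R fact n)" for n
  proof -
    define c where "c = real (Suc (Suc n)) * real (Suc n)"
    have f: "fact (Suc (Suc n)) = c * (fact n :: real)"
      unfolding c_def by (simp only: fact_Suc of_nat_mult mult.assoc)
    have r: "real (Suc (Suc n)) * (real (Suc (Suc n)) - 1) = c"
      unfolding c_def by simp
    have nz: "c \<noteq> 0" "(fact n :: real) \<noteq> 0" unfolding c_def by auto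
    have "?g (Suc (Suc n)) = L ^ (Suc (Suc n)) / (c * fact n) * exp (- L) * (c * Q ^ n)"
      by (simp only: f r) simp
    also have "\<dots> = L ^ (Suc (Suc n)) / fact n * exp (- L) * Q ^ n"
      using nz by (simp add: field_simps)
    finally show ?thesis
      by (simp add: power_mult_distrib power2_eq_square field_simps)
  qed
  ultimately have "(\<lambda>n. ?g (Suc (Suc n))) sums (L\<^sup>2 * exp (- L) * exp (L * Q))" by simp
  then have "(\<lambda>n. ?g (Suc n)) sums (L\<^sup>2 * exp (- L) * exp (L * Q) + ?g (Suc 0))"
    by (subst (asm) sums_Suc_iff)
  then have "?g sums (L\<^sup>2 * exp (- L) * exp (L * Q) + ?g (Suc 0) + ?g 0)"
    by (subst (asm) sums_Suc_iff)
  then show ?thesis by simp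
qed

lemma integral_le_from_nn:
  fixes f :: "'a \<Rightarrow> real"
  assumes "\<And>x. 0 \<le> f x" "(\<integral>\<^sup>+x. ennreal (f x) \<partial>M) \<le> ennreal r" "0 \<le> r"
  shows "integral\<^sup>L M f \<le> r"
proof (cases "integrable M f")
  case True
  then have "ennreal (integral\<^sup>L M f) = (\<integral>\<^sup>+x. ennreal (f x) \<partial>M)"
    using assms(1) by (intro nn_integral_eq_integral[symmetric]) auto
  with assms(2) have "ennreal (integral\<^sup>L M f) \<le> ennreal r" by simp
  then show ?thesis using ennreal_le_iff[OF assms(3)] by blast
next
  case False
  then show ?thesis using assms(3) by (simp add: not_integrable_integral_eq)
qed


lemma bnd_meas:
  fixes H :: "real \<Rightarrow> real" and L n k l :: nat and Ai Aj :: "real set"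
  assumes Hm: "Hp H \<in> borel_measurable borel" and kl: "k < n" "l < n"
    and Ai: "Ai \<in> sets borel" and Aj: "Aj \<in> sets borel"
  shows "(\<lambda>x. ennreal (if k \<noteq> l then indicator Ai (x k) * indicator Aj (x l) *
            (\<Prod>z\<in>{..<n} - {k, l}. psi H \<tau> \<alpha> L (x k) (x l) (x z)) else 0))
     \<in> borel_measurable (PiM {..<n} (\<lambda>_. uniform_measure lborel {0..<real L}))"
proof -
  note [measurable] = Ai Aj
  have c: "(\<lambda>x. x z) \<in> borel_measurable (PiM {..<n} (\<lambda>_. uniform_measure lborel {0..<real L}))" if "z < n" for z
    using measurable_component_singleton[of z "{..<n}" "\<lambda>_. uniform_measure lborel {0..<real L}"] that
    by (simp cong: measurable_cong_sets)
  show ?thesis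
  proof (cases "k = l")
    case True
    then show ?thesis by simp
  next
    case False
    have "(\<lambda>x. ennreal (indicator Ai (x k) * indicator Aj (x l) *
            (\<Prod>z\<in>{..<n} - {k, l}. psi H \<tau> \<alpha> L (x k) (x l) (x z))))
       \<in> borel_measurable (PiM {..<n} (\<lambda>_. uniform_measure lborel {0..<real L}))"
    proof (intro measurable_compose[OF _ measurable_ennreal] borel_measurable_times borel_measurable_prod)
      show "(\<lambda>x. indicator Ai (x k) :: real) \<in> borel_measurable (PiM {..<n} (\<lambda>_. uniform_measure lborel {0..<real L}))"
        using c[OF kl(1)] by measurable
      show "(\<lambda>x. indicator Aj (x l) :: real) \<in> borel_measurable (PiM {..<n} (\<lambda>_. uniform_measure lborel {0..<real L}))"
        using c[OF kl(2)] by measurable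
      fix z assume "z \<in> {..<n} - {k, l}"
      then have "z < n" by simp
      show "(\<lambda>x. psi H \<tau> \<alpha> L (x k) (x l) (x z)) \<in> borel_measurable (PiM {..<n} (\<lambda>_. uniform_measure lborel {0..<real L}))"
        by (rule psi_meas[OF Hm c[OF kl(1)] c[OF kl(2)] c[OF \<open>z < n\<close>]])
    qed
    then show ?thesis using False by simp
  qed
qed

lemma seg_sub: assumes m: "m > 0" and i: "i \<in> Gamma m L" shows "seg m i \<subseteq> {0..<real L}"
proof
  fix x assume "x \<in> seg m i"
  then have x: "(real i - 1) / real m \<le> x" "x < real i / real m" unfolding seg_def by auto
  have i1: "1 \<le> i" "i \<le> m * L" using i unfolding Gamma_def by auto
  have "0 \<le> (real i - 1) / real m" using i1 by simp
  moreover have "real i \<le> real m * real L" using i1 by (metis of_nat_le_iff of_nat_mult)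
  then have "real i / real m \<le> real L" using m by (simp add: divide_le_eq mult.commute)
  ultimately show "x \<in> {0..<real L}" using x by auto
qed

lemma seg_disj: "m > 0 \<Longrightarrow> i \<noteq> j \<Longrightarrow> seg m i \<inter> seg m j = {}"
proof (rule ccontr)
  assume m: "m > 0" and ij: "i \<noteq> j" and "seg m i \<inter> seg m j \<noteq> {}"
  then obtain x where "x \<in> seg m i" "x \<in> seg m j" by auto
  then have "(real i - 1) / m \<le> x" "x < real i / m" "(real j - 1) / m \<le> x" "x < real j / m"
    unfolding seg_def by auto
  then have "real i - 1 \<le> x * m" "x * m < real i" "real j - 1 \<le> x * m" "x * m < real j"
    using m by (simp_all add: divide_le_eq less_divide_eq)
  then have "real i < real j + 1" "real j < real i + 1" by linarith+
  then show False using ij by linarith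
qed

lemma emeasure_seg: "m > 0 \<Longrightarrow> L > 0 \<Longrightarrow> i \<in> Gamma m L \<Longrightarrow>
   emeasure (uniform_measure lborel {0..<real L}) (seg m i) = ennreal (1 / (real m * real L))"
proof -
  assume m: "m > 0" and L: "L > 0" and i: "i \<in> Gamma m L"
  have s: "{0..<real L} \<inter> seg m i = seg m i" using seg_sub[OF m i] by auto
  have le: "(real i - 1) / real m \<le> real i / real m" using m by (simp add: divide_right_mono)
  have "emeasure lborel (seg m i) = ennreal (real i / real m - (real i - 1) / real m)"
    unfolding seg_def using le by (rule emeasure_lborel_Ico)
  also have "real i / real m - (real i - 1) / real m = 1 / real m"
    by (simp add: diff_divide_distrib)
  finally have e: "emeasure lborel (seg m i) = ennreal (1 / real m)" .
  have "emeasure (uniform_measure lborel {0..<real L}) (seg m i) = emeasure lborel ({0..<real L} \<inter> seg m i) / emeasure lborel {0..<real L}"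
    by (rule emeasure_uniform_measure) (auto simp: seg_def)
  also have "\<dots> = ennreal (1 / real m) / ennreal (real L)" unfolding s e using L by simp
  also have "\<dots> = ennreal (1 / (real m * real L))" using m L by (simp add: divide_ennreal)
  finally show ?thesis .
qed


lemma pij_bound:
  fixes H :: "real \<Rightarrow> real" and L m i j :: nat and \<tau> \<alpha> :: real
  defines "R \<equiv> RL H \<tau> L"
  defines "T \<equiv> RL H \<tau> L powr (1 + 1 / \<alpha>)"
  defines "\<Phi> \<equiv> LBINT s:{0..T/R}. H s - (H s)\<^sup>2 / 2"
  assumes meas: "set_borel_measurable lborel {0..} H"
    and range: "\<And>x. x \<ge> 0 \<Longrightarrow> 0 \<le> H x \<and> H x \<le> 1"
    and int1: "set_integrable lborel {0..} H"
    and L: "L > 0" and R: "R > 0" and T: "2 * T \<le> real L"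
    and m: "m > 0" and i: "i \<in> Gamma m L" and j: "j \<in> Gamma m L" and ij: "i \<noteq> j"
  shows "pij H \<tau> \<alpha> m L i j \<le> exp (- (4 * R * \<Phi>)) / (real m)\<^sup>2"
    and "0 \<le> pij H \<tau> \<alpha> m L i j"
proof -
  define U where "U = uniform_measure lborel {0..<real L}"
  define u where "u = 1 / (real m * real L)"
  define Q where "Q = 1 - 4 * R * \<Phi> / real L"
  have Hm: "Hp H \<in> borel_measurable borel" by (rule Hp_meas[OF meas])
  have Ai: "seg m i \<subseteq> {0..<real L}" and Aj: "seg m j \<subseteq> {0..<real L}"
    using seg_sub[OF m i] seg_sub[OF m j] .
  have disj: "seg m i \<inter> seg m j = {}" using seg_disj[OF m ij] .
  have segs: "seg m a \<in> sets borel" for a unfolding seg_def by simp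
  note qb = q_bound[OF meas range int1 L R[unfolded R_def] T[unfolded T_def]]
  have Q0: "0 \<le> Q" using qb(2)[of 0 0] L unfolding Q_def \<Phi>_def T_def R_def by simp
  have Qb: "(\<integral>\<^sup>+t. ennreal (psi H \<tau> \<alpha> L a b t) \<partial>U) \<le> ennreal Q" if "a \<in> seg m i" "b \<in> seg m j" for a b
    using qb(1)[of a b] that Ai Aj unfolding Q_def U_def \<Phi>_def T_def R_def by blast
  have u0: "0 \<le> u" unfolding u_def by simp
  have eU: "emeasure U (seg m a) = ennreal u" if "a \<in> Gamma m L" for a
    unfolding U_def u_def using emeasure_seg[OF m L that] .
  define F where "F n = (\<integral>x. measure_pmf.prob (edge_pmf H \<tau> \<alpha> L n x)
                 {e. good m n x e i \<and> good m n x e j} \<partial>(PiM {..<n} (\<lambda>_. U)))" for n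
  have F0: "0 \<le> F n" for n
    unfolding F_def by (intro integral_nonneg_AE AE_I2 measure_nonneg)
  have Fb: "F n \<le> real n * (real n - 1) * Q ^ (n - 2) * u\<^sup>2" for n
  proof -
    define bnd where "bnd k l x = (if k \<noteq> l then indicator (seg m i) (x k) * indicator (seg m j) (x l) *
            (\<Prod>z\<in>{..<n} - {k, l}. psi H \<tau> \<alpha> L (x k) (x l) (x z)) else 0)" for k l and x :: "nat \<Rightarrow> real"
    have bnd0: "0 \<le> bnd k l x" for k l x
      unfolding bnd_def by (auto intro!: mult_nonneg_nonneg prod_nonneg psi_range[OF range])
    have "(\<integral>\<^sup>+x. ennreal (measure_pmf.prob (edge_pmf H \<tau> \<alpha> L n x)
                 {e. good m n x e i \<and> good m n x e j}) \<partial>(PiM {..<n} (\<lambda>_. U)))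
        \<le> (\<integral>\<^sup>+x. (\<Sum>k<n. \<Sum>l<n. ennreal (bnd k l x)) \<partial>(PiM {..<n} (\<lambda>_. U)))"
    proof (rule nn_integral_mono)
      fix x
      have "measure_pmf.prob (edge_pmf H \<tau> \<alpha> L n x) {e. good m n x e i \<and> good m n x e j} \<le> (\<Sum>k<n. \<Sum>l<n. bnd k l x)"
        unfolding bnd_def using prob_good_bound[OF range R[unfolded R_def] Ai Aj disj] .
      then show "ennreal (measure_pmf.prob (edge_pmf H \<tau> \<alpha> L n x) {e. good m n x e i \<and> good m n x e j})
          \<le> (\<Sum>k<n. \<Sum>l<n. ennreal (bnd k l x))"
        using bnd0 by (simp add: sum_nonneg)
    qed
    also have "\<dots> = (\<Sum>k<n. \<Sum>l<n. (\<integral>\<^sup>+x. ennreal (bnd k l x) \<partial>(PiM {..<n} (\<lambda>_. U))))"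
    proof -
      have bm: "(\<lambda>x. ennreal (bnd k l x)) \<in> borel_measurable (PiM {..<n} (\<lambda>_. U))" if "k < n" "l < n" for k l
        unfolding bnd_def U_def by (rule bnd_meas[OF Hm that segs segs])
      have "(\<integral>\<^sup>+x. (\<Sum>k<n. \<Sum>l<n. ennreal (bnd k l x)) \<partial>(PiM {..<n} (\<lambda>_. U)))
         = (\<Sum>k<n. (\<integral>\<^sup>+x. (\<Sum>l<n. ennreal (bnd k l x)) \<partial>(PiM {..<n} (\<lambda>_. U))))"
        using bm by (intro nn_integral_sum) (auto intro!: borel_measurable_sum)
      also have "\<dots> = (\<Sum>k<n. \<Sum>l<n. (\<integral>\<^sup>+x. ennreal (bnd k l x) \<partial>(PiM {..<n} (\<lambda>_. U))))"
        using bm by (intro sum.cong refl nn_integral_sum) auto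
      finally show ?thesis .
    qed
    also have "\<dots> \<le> (\<Sum>k<n. \<Sum>l<n. ennreal (if k \<noteq> l then u * u * Q ^ (n - 2) else 0))"
    proof (intro sum_mono)
      fix k l assume k: "k \<in> {..<n}" and l: "l \<in> {..<n}"
      show "(\<integral>\<^sup>+x. ennreal (bnd k l x) \<partial>(PiM {..<n} (\<lambda>_. U))) \<le> ennreal (if k \<noteq> l then u * u * Q ^ (n - 2) else 0)"
      proof (cases "k = l")
        case True
        then show ?thesis unfolding bnd_def by simp
      next
        case False
        have "(\<integral>\<^sup>+x. ennreal (bnd k l x) \<partial>(PiM {..<n} (\<lambda>_. U))) \<le> emeasure U (seg m i) * emeasure U (seg m j) * ennreal Q ^ (n - 2)"
          unfolding bnd_def U_def using False k l
          by (simp add: PiM_bound[OF Hm range L False _ _ segs segs Q0 Qb[unfolded U_def]])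
        also have "\<dots> = ennreal (u * u * Q ^ (n - 2))"
          using eU[OF i] eU[OF j] u0 Q0 by (simp add: ennreal_mult ennreal_power)
        finally show ?thesis using False by simp
      qed
    qed
    also have "\<dots> = ennreal (\<Sum>k<n. \<Sum>l<n. (if k \<noteq> l then u * u * Q ^ (n - 2) else 0))"
      using u0 Q0 by (simp add: sum_nonneg)
    also have "(\<Sum>k<n. \<Sum>l<n. (if k \<noteq> l then u * u * Q ^ (n - 2) else 0)) = real n * (real n - 1) * Q ^ (n - 2) * u\<^sup>2"
    proof -
      have "(\<Sum>l<n. (if k \<noteq> l then u * u * Q ^ (n - 2) else 0)) = (real n - 1) * (u * u * Q ^ (n - 2))" if "k < n" for k
      proof -
        have "(\<Sum>l<n. (if k \<noteq> l then u * u * Q ^ (n - 2) else 0)) = (\<Sum>l<n. u * u * Q ^ (n - 2) - (if l = k then u * u * Q ^ (n - 2) else 0))"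
          by (intro sum.cong) auto
        also have "\<dots> = real n * (u * u * Q ^ (n - 2)) - u * u * Q ^ (n - 2)"
          using that by (simp add: sum_subtractf)
        finally show ?thesis by (simp add: algebra_simps)
      qed
      then have "(\<Sum>k<n. \<Sum>l<n. (if k \<noteq> l then u * u * Q ^ (n - 2) else 0)) = (\<Sum>k<n. (real n - 1) * (u * u * Q ^ (n - 2)))"
        by (intro sum.cong) auto
      then show ?thesis by (simp add: power2_eq_square algebra_simps)
    qed
    finally have "(\<integral>\<^sup>+x. ennreal (measure_pmf.prob (edge_pmf H \<tau> \<alpha> L n x)
                 {e. good m n x e i \<and> good m n x e j}) \<partial>(PiM {..<n} (\<lambda>_. U))) \<le> ennreal (real n * (real n - 1) * Q ^ (n - 2) * u\<^sup>2)" .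
    moreover have "0 \<le> real n * (real n - 1)" by (cases n) auto
    then have "0 \<le> real n * (real n - 1) * Q ^ (n - 2) * u\<^sup>2"
      by (rule mult_nonneg_nonneg[OF mult_nonneg_nonneg[OF _ zero_le_power[OF Q0]] zero_le_power2])
    ultimately show ?thesis unfolding F_def
      by (intro integral_le_from_nn) auto
  qed
  define \<beta> where "\<beta> n = real L ^ n / fact n * exp (- real L) * (real n * (real n - 1) * Q ^ (n - 2)) * u\<^sup>2" for n
  have \<beta>s: "\<beta> sums ((real L)\<^sup>2 * exp (- real L) * exp (real L * Q) * u\<^sup>2)"
    unfolding \<beta>_def by (intro sums_mult2 poisson_sum)
  have pij_eq: "pij H \<tau> \<alpha> m L i j = (\<Sum>n. pmf (poisson_pmf (real L)) n * F n)"
    unfolding pij_def F_def U_def ..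
  have le: "pmf (poisson_pmf (real L)) n * F n \<le> \<beta> n" for n
  proof -
    have "pmf (poisson_pmf (real L)) n * F n \<le> pmf (poisson_pmf (real L)) n * (real n * (real n - 1) * Q ^ (n - 2) * u\<^sup>2)"
      by (intro mult_left_mono Fb pmf_nonneg)
    also have "\<dots> = \<beta> n" unfolding \<beta>_def using L by simp
    finally show ?thesis .
  qed
  have nn: "0 \<le> pmf (poisson_pmf (real L)) n * F n" for n by (intro mult_nonneg_nonneg pmf_nonneg F0)
  have summ: "summable (\<lambda>n. pmf (poisson_pmf (real L)) n * F n)"
    by (rule summable_comparison_test'[where g=\<beta>]) (use \<beta>s le nn in \<open>auto simp: sums_iff\<close>)
  show "0 \<le> pij H \<tau> \<alpha> m L i j" unfolding pij_eq using summ nn by (rule suminf_nonneg)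
  have "pij H \<tau> \<alpha> m L i j \<le> suminf \<beta>"
    unfolding pij_eq using summ \<beta>s le by (intro suminf_le) (auto simp: sums_iff)
  also have "suminf \<beta> = (real L)\<^sup>2 * exp (- real L) * exp (real L * Q) * u\<^sup>2"
    using \<beta>s by (simp add: sums_iff)
  also have "\<dots> = exp (- (4 * R * \<Phi>)) / (real m)\<^sup>2"
  proof -
    have "exp (- real L) * exp (real L * Q) = exp (- (4 * R * \<Phi>))"
    proof -
      have "real L * Q = real L - 4 * R * \<Phi>" unfolding Q_def using L by (simp add: field_simps)
      then have "- real L + real L * Q = - (4 * R * \<Phi>)" by simp
      then show ?thesis by (simp add: mult_exp_exp)
    qed
    moreover have "(real L)\<^sup>2 * u\<^sup>2 = 1 / (real m)\<^sup>2"
      unfolding u_def using L by (simp add: power2_eq_square field_simps)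
    ultimately show ?thesis by (metis (no_types, lifting) mult.commute mult.left_commute times_divide_eq_right mult_1_right)
  qed
  finally show "pij H \<tau> \<alpha> m L i j \<le> exp (- (4 * R * \<Phi>)) / (real m)\<^sup>2" .
qed


lemma card_real_interval:
  fixes a b :: real
  shows "real (card {j::nat. a \<le> real j \<and> real j \<le> b}) \<le> max 0 (b - a + 1)"
proof (cases "b < 0")
  case True
  then have e: "{j::nat. a \<le> real j \<and> real j \<le> b} = {}" by auto
  show ?thesis unfolding e by simp
next
  case False
  have sub: "{j::nat. a \<le> real j \<and> real j \<le> b} \<subseteq> {nat \<lceil>a\<rceil>..nat \<lfloor>b\<rfloor>}"
  proof
    fix j assume j: "j \<in> {j::nat. a \<le> real j \<and> real j \<le> b}"
    then have aj: "a \<le> real j" and bj: "real j \<le> b" by auto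
    have "\<lceil>a\<rceil> \<le> int j" using aj by (simp add: ceiling_le_iff)
    moreover have "int j \<le> \<lfloor>b\<rfloor>" using bj by (simp add: le_floor_iff)
    ultimately
    show "j \<in> {nat \<lceil>a\<rceil>..nat \<lfloor>b\<rfloor>}" using aj bj by auto
  qed
  have "card {j::nat. a \<le> real j \<and> real j \<le> b} \<le> card {nat \<lceil>a\<rceil>..nat \<lfloor>b\<rfloor>}"
    by (rule card_mono[OF _ sub]) simp
  also have "card {nat \<lceil>a\<rceil>..nat \<lfloor>b\<rfloor>} = Suc (nat \<lfloor>b\<rfloor>) - nat \<lceil>a\<rceil>" by simp
  finally have c: "real (card {j::nat. a \<le> real j \<and> real j \<le> b}) \<le> real (Suc (nat \<lfloor>b\<rfloor>) - nat \<lceil>a\<rceil>)"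
    by (simp only: of_nat_le_iff)
  show ?thesis
  proof (cases "nat \<lceil>a\<rceil> \<le> Suc (nat \<lfloor>b\<rfloor>)")
    case True
    have "real (Suc (nat \<lfloor>b\<rfloor>) - nat \<lceil>a\<rceil>) = real (nat \<lfloor>b\<rfloor>) + 1 - real (nat \<lceil>a\<rceil>)"
      using True by (simp add: of_nat_diff)
    also have "real (nat \<lfloor>b\<rfloor>) \<le> b" using False by (simp add: of_nat_nat)
    also have "real (nat \<lceil>a\<rceil>) \<ge> a"
    proof (cases "0 \<le> \<lceil>a\<rceil>")
      case True
      then show ?thesis using le_of_int_ceiling[of a] by (simp add: of_nat_nat)
    next
      case False
      then show ?thesis using le_of_int_ceiling[of a] by simp
    qed
    then have "b + 1 - real (nat \<lceil>a\<rceil>) \<le> b - a + 1" by simp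
    finally show ?thesis using c by linarith
  next
    case False
    then have "Suc (nat \<lfloor>b\<rfloor>) - nat \<lceil>a\<rceil> = 0" by arith
    then show ?thesis using c by simp
  qed
qed

lemma finite_real_le: "finite {j::nat. real j \<le> b}"
proof (rule finite_subset[of _ "{..nat \<lceil>b\<rceil>}"])
  show "{j::nat. real j \<le> b} \<subseteq> {..nat \<lceil>b\<rceil>}"
    by (auto simp: le_nat_iff le_ceiling_iff)
qed simp

lemma card_Bset:
  fixes H :: "real \<Rightarrow> real" and \<tau> \<alpha> :: real and m L i :: nat
  defines "T \<equiv> RL H \<tau> L powr (1 + 1 / \<alpha>)"
  assumes m: "m > 0" and i: "i \<in> Gamma m L"
  shows "real (card (Bset H \<tau> \<alpha> m L i)) \<le> 12 * T * real m + 1"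
proof -
  define r where "r = 3 * T * real m"
  define N where "N = m * L"
  have r0: "0 \<le> r" unfolding r_def T_def by simp
  have i1: "1 \<le> i" "i \<le> N" using i unfolding Gamma_def N_def by auto
  have ri: "1 \<le> real i" "real i \<le> real N" using i1 by auto
  define S1 where "S1 = {j::nat. real i - r \<le> real j \<and> real j \<le> real i + r}"
  define S2 where "S2 = {j::nat. real i + real N - r \<le> real j \<and> real j \<le> real N}"
  define S3 where "S3 = {j::nat. 1 \<le> real j \<and> real j \<le> real i - real N + r}"
  have sub: "Bset H \<tau> \<alpha> m L i \<subseteq> S1 \<union> S2 \<union> S3"
  proof
    fix j assume "j \<in> Bset H \<tau> \<alpha> m L i"
    then have j: "1 \<le> j" "j \<le> N" and rho: "rhoL (real L) (centre m i) (centre m j) \<le> 3 * T"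
      unfolding Bset_def Gamma_def N_def T_def by auto
    have d: "\<bar>centre m i - centre m j\<bar> = \<bar>real i - real j\<bar> / real m"
      unfolding centre_def using m by (simp add: diff_divide_distrib[symmetric] abs_divide)
    have mpos: "real m > 0" using m by simp
    have NL: "real N = real m * real L" unfolding N_def by simp
    from rho have "\<bar>real i - real j\<bar> / real m \<le> 3 * T \<or> real L - \<bar>real i - real j\<bar> / real m \<le> 3 * T"
      unfolding rhoL_def d by (simp add: min_le_iff_disj)
    then show "j \<in> S1 \<union> S2 \<union> S3"
    proof
      assume "\<bar>real i - real j\<bar> / real m \<le> 3 * T"
      then have "\<bar>real i - real j\<bar> \<le> r" unfolding r_def using mpos by (simp add: divide_le_eq mult.commute)
      then show ?thesis unfolding S1_def by auto
    next
      assume "real L - \<bar>real i - real j\<bar> / real m \<le> 3 * T"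
      then have "real m * real L - \<bar>real i - real j\<bar> \<le> r" unfolding r_def using mpos
        by (simp add: field_simps)
      then have "real N - r \<le> \<bar>real i - real j\<bar>" unfolding NL by simp
      show ?thesis
      proof (cases "real i \<le> real j")
        case True
        then have "real i + real N - r \<le> real j" using \<open>real N - r \<le> \<bar>real i - real j\<bar>\<close> by linarith
        moreover have "real j \<le> real N" using j(2) by simp
        ultimately have "j \<in> S2" unfolding S2_def by blast
        then show ?thesis by blast
      next
        case False
        then have "real j \<le> real i - real N + r" using \<open>real N - r \<le> \<bar>real i - real j\<bar>\<close> by linarith
        moreover have "1 \<le> real j" using j(1) by simp
        ultimately have "j \<in> S3" unfolding S3_def by blast
        then show ?thesis by blast
      qed
    qed
  qed
  have fin: "finite S1" "finite S2" "finite S3"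
    unfolding S1_def S2_def S3_def
    by (rule rev_finite_subset[OF finite_real_le], blast)+
  have "card (Bset H \<tau> \<alpha> m L i) \<le> card (S1 \<union> S2 \<union> S3)"
    by (rule card_mono[OF _ sub]) (use fin in auto)
  also have "\<dots> \<le> card S1 + card S2 + card S3"
    using card_Un_le[of "S1 \<union> S2" S3] card_Un_le[of S1 S2] by linarith
  finally have "real (card (Bset H \<tau> \<alpha> m L i)) \<le> real (card S1 + card S2 + card S3)"
    by (simp only: of_nat_le_iff)
  then have "real (card (Bset H \<tau> \<alpha> m L i)) \<le> real (card S1) + real (card S2) + real (card S3)"
    by simp
  also have "real (card S1) \<le> 2 * r + 1"
  proof -
    have "max 0 (real i + r - (real i - r) + 1) \<le> 2 * r + 1" using r0 by (simp add: max_def)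
    then show ?thesis using card_real_interval[of "real i - r" "real i + r"] unfolding S1_def by linarith
  qed
  also have "real (card S2) \<le> r"
  proof -
    have "max 0 (real N - (real i + real N - r) + 1) \<le> r" using r0 ri by (simp add: max_def)
    then show ?thesis using card_real_interval[of "real i + real N - r" "real N"] unfolding S2_def by linarith
  qed
  also have "real (card S3) \<le> r"
  proof -
    have "max 0 (real i - real N + r - 1 + 1) \<le> r" using r0 ri by (simp add: max_def)
    then show ?thesis using card_real_interval[of 1 "real i - real N + r"] unfolding S3_def by linarith
  qed
  finally show ?thesis unfolding r_def by simp
qed

lemma b2_bound:
  fixes H :: "real \<Rightarrow> real" and L m :: nat and \<tau> \<alpha> E :: real
  defines "R \<equiv> RL H \<tau> L"
  defines "T \<equiv> RL H \<tau> L powr (1 + 1 / \<alpha>)"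
  defines "\<Phi> \<equiv> LBINT s:{0..T/R}. H s - (H s)\<^sup>2 / 2"
  assumes meas: "set_borel_measurable lborel {0..} H"
    and range: "\<And>x. x \<ge> 0 \<Longrightarrow> 0 \<le> H x \<and> H x \<le> 1"
    and int1: "set_integrable lborel {0..} H"
    and L: "L > 0" and R: "R > 0" and T: "2 * T \<le> real L"
    and m: "m > 0" and E: "exp (- (4 * R * \<Phi>)) \<le> E"
  shows "0 \<le> b2 H \<tau> \<alpha> m L" "b2 H \<tau> \<alpha> m L \<le> real L * (12 * T + 1) * E"
proof -
  have E0: "0 \<le> E" using E by (meson exp_ge_zero order_trans)
  have inB: "j \<in> Gamma m L" if "j \<in> Bset H \<tau> \<alpha> m L i" for i j
    using that unfolding Bset_def by auto
  have pb: "0 \<le> pij H \<tau> \<alpha> m L i j \<and> pij H \<tau> \<alpha> m L i j \<le> E / (real m)\<^sup>2"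
    if "i \<in> Gamma m L" "j \<in> Bset H \<tau> \<alpha> m L i - {i}" for i j
  proof -
    have j: "j \<in> Gamma m L" "i \<noteq> j" using that inB by auto
    note pbs = pij_bound[OF meas range int1 L R[unfolded R_def] T[unfolded T_def] m that(1) j]
    have "exp (- (4 * R * \<Phi>)) / (real m)\<^sup>2 \<le> E / (real m)\<^sup>2"
      using E by (simp add: divide_right_mono)
    then show ?thesis using pbs unfolding R_def T_def \<Phi>_def by auto
  qed
  show "0 \<le> b2 H \<tau> \<alpha> m L" unfolding b2_def
    using pb by (intro sum_nonneg) auto
  have "b2 H \<tau> \<alpha> m L \<le> (\<Sum>i\<in>Gamma m L. \<Sum>j\<in>Bset H \<tau> \<alpha> m L i - {i}. E / (real m)\<^sup>2)"
    unfolding b2_def using pb by (intro sum_mono) auto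
  also have "\<dots> \<le> (\<Sum>i\<in>Gamma m L. (12 * T * real m + 1) * (E / (real m)\<^sup>2))"
  proof (intro sum_mono)
    fix i assume i: "i \<in> Gamma m L"
    have fin: "finite (Bset H \<tau> \<alpha> m L i)" unfolding Bset_def Gamma_def by simp
    have "real (card (Bset H \<tau> \<alpha> m L i - {i})) \<le> real (card (Bset H \<tau> \<alpha> m L i))"
      using fin by (simp add: card_mono)
    also have "\<dots> \<le> 12 * T * real m + 1" unfolding T_def by (rule card_Bset[OF m i])
    finally have "real (card (Bset H \<tau> \<alpha> m L i - {i})) * (E / (real m)\<^sup>2) \<le> (12 * T * real m + 1) * (E / (real m)\<^sup>2)"
      by (rule mult_right_mono) (use E0 in simp)
    then show "(\<Sum>j\<in>Bset H \<tau> \<alpha> m L i - {i}. E / (real m)\<^sup>2) \<le> (12 * T * real m + 1) * (E / (real m)\<^sup>2)"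
      by (simp only: sum_constant)
  qed
  also have "\<dots> = real m * real L * (12 * T * real m + 1) * (E / (real m)\<^sup>2)"
    unfolding Gamma_def by simp
  also have "\<dots> = real L * (12 * T + 1 / real m) * E"
    using m by (simp add: power2_eq_square field_simps)
  also have "\<dots> \<le> real L * (12 * T + 1) * E"
  proof -
    have "1 / real m \<le> 1" using m by simp
    then show ?thesis using E0 by (intro mult_right_mono mult_left_mono) auto
  qed
  finally show "b2 H \<tau> \<alpha> m L \<le> real L * (12 * T + 1) * E" .
qed

theorem lemma6:
  fixes H :: "real \<Rightarrow> real" and \<tau> \<alpha> :: real
  assumes meas: "set_borel_measurable lborel {0..} H"
    and range: "\<And>x. x \<ge> 0 \<Longrightarrow> 0 \<le> H x \<and> H x \<le> 1"
    and int1: "set_integrable lborel {0..} H"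
    and norm2: "norm2sq H < norm1 H"
    and tau: "\<tau> > 0" and alpha: "\<alpha> > 0"
  shows "((\<lambda>L. limsup (\<lambda>m. ereal (b2 H \<tau> \<alpha> m L))) \<longlongrightarrow> 0) sequentially"
proof -
  define N1 where "N1 = norm1 H"
  define N2 where "N2 = norm2sq H"
  have N20: "0 \<le> N2" unfolding N2_def norm2sq_def set_lebesgue_integral_def
    by (intro integral_nonneg_AE AE_I2) (simp add: indicator_def)
  have N1: "N1 > 0" using N20 norm2 unfolding N1_def N2_def by simp
  define \<kappa> where "\<kappa> = (N1 - N2) / (2 * N1)"
  have \<kappa>: "\<kappa> > 0" unfolding \<kappa>_def using N1 norm2 N1_def N2_def by simp
  define c0 where "c0 = N1 / 2 + (N1 - N2) / 4"
  have c0: "c0 < N1 - N2 / 2" unfolding c0_def using norm2 unfolding N1_def N2_def by (simp add: field_simps)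
  have c0k: "2 * c0 / N1 = 1 + \<kappa>" unfolding c0_def \<kappa>_def using N1 by (simp add: field_simps)
  define Rf where "Rf L = RL H \<tau> L" for L
  define Tf where "Tf L = RL H \<tau> L powr (1 + 1 / \<alpha>)" for L
  define \<Phi>f where "\<Phi>f L = (LBINT s:{0..Tf L / Rf L}. H s - (H s)\<^sup>2 / 2)" for L
  define Bf where "Bf L = real L * (12 * Tf L + 1) * (\<tau> * real L) powr (- (1 + \<kappa>))" for L
  have Rf_eq: "Rf L = ln (\<tau> * real L) / (2 * N1)" for L unfolding Rf_def RL_def N1_def ..
  have Tf_eq: "Tf L = (ln (\<tau> * real L) / (2 * N1)) powr (1 + 1 / \<alpha>)" for L
    unfolding Tf_def RL_def N1_def ..
  have ev1: "eventually (\<lambda>L. 1 < \<tau> * real L) sequentially"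
    using tau by real_asymp
  have ev2: "eventually (\<lambda>L. 2 * Tf L \<le> real L) sequentially"
    unfolding Tf_eq using tau N1 alpha by real_asymp
  have lim_M: "filterlim (\<lambda>L. Rf L powr (1 / \<alpha>)) at_top sequentially"
    unfolding Rf_eq using tau N1 alpha by real_asymp
  have "((\<lambda>L. LBINT s:{0..Rf L powr (1 / \<alpha>)}. H s - (H s)\<^sup>2 / 2) \<longlongrightarrow> N1 - N2 / 2) sequentially"
    using filterlim_compose[OF Phi_lim[OF meas range int1] lim_M] unfolding N1_def N2_def .
  then have ev3': "eventually (\<lambda>L. c0 < (LBINT s:{0..Rf L powr (1 / \<alpha>)}. H s - (H s)\<^sup>2 / 2)) sequentially"
    using c0 by (rule order_tendstoD(1))
  have lim_B: "(Bf \<longlongrightarrow> 0) sequentially"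
    unfolding Bf_def Tf_eq using tau N1 alpha \<kappa> by real_asymp
  have ev: "eventually (\<lambda>L. \<forall>m>0. 0 \<le> b2 H \<tau> \<alpha> m L \<and> b2 H \<tau> \<alpha> m L \<le> Bf L) sequentially"
    using ev1 ev2 ev3'
  proof eventually_elim
    case (elim L)
    have L: "L > 0" using elim(1) tau by (cases L) auto
    have lnpos: "0 < ln (\<tau> * real L)" using elim(1) by simp
    have R: "Rf L > 0" unfolding Rf_eq using lnpos N1 by simp
    have TR: "Tf L / Rf L = Rf L powr (1 / \<alpha>)"
      unfolding Tf_def Rf_def using R[unfolded Rf_def] by (simp add: powr_add)
    have \<Phi>: "c0 < \<Phi>f L" unfolding \<Phi>f_def TR using elim(3) .
    have "(1 + \<kappa>) * ln (\<tau> * real L) \<le> 4 * Rf L * \<Phi>f L"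
    proof -
      have "(1 + \<kappa>) * ln (\<tau> * real L) = 4 * Rf L * c0"
        unfolding Rf_eq c0k[symmetric] using N1 by (simp add: field_simps)
      also have "\<dots> \<le> 4 * Rf L * \<Phi>f L" using \<Phi> R by simp
      finally show ?thesis .
    qed
    then have "exp (- (4 * Rf L * \<Phi>f L)) \<le> exp (- ((1 + \<kappa>) * ln (\<tau> * real L)))"
      by simp
    also have "exp (- ((1 + \<kappa>) * ln (\<tau> * real L))) = (\<tau> * real L) powr (- (1 + \<kappa>))"
      using elim(1) L tau unfolding powr_def by (simp add: algebra_simps)
    finally have E: "exp (- (4 * Rf L * \<Phi>f L)) \<le> (\<tau> * real L) powr (- (1 + \<kappa>))" .
    show ?case
    proof (intro allI impI)
      fix m :: nat assume m: "m > 0"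
      note bb = b2_bound[OF meas range int1 L R[unfolded Rf_def] elim(2)[unfolded Tf_def] m
          E[unfolded Rf_def \<Phi>f_def Tf_def]]
      show "0 \<le> b2 H \<tau> \<alpha> m L \<and> b2 H \<tau> \<alpha> m L \<le> Bf L"
        using bb unfolding Bf_def Tf_def by simp
    qed
  qed
  have up: "eventually (\<lambda>L. limsup (\<lambda>m. ereal (b2 H \<tau> \<alpha> m L)) \<le> ereal (Bf L)) sequentially"
    using ev
  proof eventually_elim
    case (elim L)
    show ?case
    proof (rule Limsup_bounded)
      show "eventually (\<lambda>m. ereal (b2 H \<tau> \<alpha> m L) \<le> ereal (Bf L)) sequentially"
        using eventually_gt_at_top[of 0] by eventually_elim (use elim in auto)
    qed
  qed
  have low: "eventually (\<lambda>L. 0 \<le> limsup (\<lambda>m. ereal (b2 H \<tau> \<alpha> m L))) sequentially"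
    using ev
  proof eventually_elim
    case (elim L)
    show ?case
    proof (rule le_Limsup)
      show "eventually (\<lambda>m. 0 \<le> ereal (b2 H \<tau> \<alpha> m L)) sequentially"
        using eventually_gt_at_top[of 0] by eventually_elim (use elim in auto)
    qed simp
  qed
  have "((\<lambda>L. ereal (Bf L)) \<longlongrightarrow> ereal 0) sequentially"
    using lim_B by (rule tendsto_ereal)
  then have limB': "((\<lambda>L. ereal (Bf L)) \<longlongrightarrow> 0) sequentially" by (simp add: zero_ereal_def)
  show ?thesis
    by (rule tendsto_sandwich[OF low up tendsto_const limB'])
qed

end
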